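(* Let $k,n$ be positive integers. The total number of blocks, summed over all $\pi\in NC^k(n)$, equals $\binom{n(k+1)-1}{nk}$.
   Context: A partition $\pi$ of $[N]=\{1,\dots,N\}$ is non-crossing if there are no $1\le a<b<c<d\le N$ with $a,c$ in one block and $b,d$ in another. $NC^k(n)$ is the set of non-crossing partitions of $[kn]$ all of whose blocks have size divisible by $k$. *)

theory Defs
  imports Main "HOL-Library.Disjoint_Sets"
begin

definition noncrossing :: "nat set set \<Rightarrow> bool" where
  "noncrossing P \<longleftrightarrow>
     \<not> (\<exists>B\<in>P. \<exists>C\<in>P. B \<noteq> C \<and>
          (\<exists>a b c d. a < b \<and> b < c \<and> c < d \<and> a \<in> B \<and> c \<in> B \<and> b \<in> C \<and> d \<in> C))"

definition NCk :: "nat \<Rightarrow> nat \<Rightarrow> nat set set set" where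
  "NCk k n = {P. partition_on {1..k*n} P \<and> noncrossing P \<and> (\<forall>B\<in>P. k dvd card B)}"

end

theory Submission
  imports Defs
begin


definition rf :: "nat \<Rightarrow> nat \<Rightarrow> nat \<Rightarrow> int" where
  "rf k m s = int (m choose s) - int k * (case s of 0 \<Rightarrow> 0 | Suc s' \<Rightarrow> int (m choose s'))"

definition rr :: "nat \<Rightarrow> nat \<Rightarrow> nat \<Rightarrow> int" where
  "rr k N h = (if h \<le> N \<and> k dvd (N - h) then rf k (N + (N-h) div k) ((N-h) div k) else 0)"

definition tf :: "nat \<Rightarrow> nat \<Rightarrow> nat \<Rightarrow> int" where
  "tf h m s = (case s of 0 \<Rightarrow> 0 | Suc s' \<Rightarrow> int (h+1) * int ((m - 1) choose s'))"

definition tt :: "nat \<Rightarrow> nat \<Rightarrow> nat \<Rightarrow> int" where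
  "tt k N h = (if h \<le> N \<and> k dvd (N - h) then tf h (N + (N-h) div k) ((N-h) div k) else 0)"

lemma rr_eq: "0 < k \<Longrightarrow> rr k (h + k*s) h = rf k (h + k*s + s) s"
  by (simp add: rr_def)

lemma tt_eq: "0 < k \<Longrightarrow> tt k (h + k*s) h = tf h (h + k*s + s) s"
  by (simp add: tt_def)

lemma rr_zero: "\<not> (\<exists>s. N = h + k*s) \<Longrightarrow> rr k N h = 0"
  unfolding rr_def by (metis dvdE le_add_diff_inverse)

lemma tt_zero: "\<not> (\<exists>s. N = h + k*s) \<Longrightarrow> tt k N h = 0"
  unfolding tt_def by (metis dvdE le_add_diff_inverse)

lemma suc_choose: "Suc s * (n choose Suc s) = (n - s) * (n choose s)"
  by (metis binomial_absorption binomial_absorb_comp)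

lemma choose_zero_lemma:
  assumes "Suc M = k * Suc s"
  shows "(M + Suc s) choose Suc s = k * ((M + Suc s) choose s)"
proof -
  have "Suc s * ((M + Suc s) choose Suc s) = (Suc M) * ((M + Suc s) choose s)"
    using suc_choose[of s "M + Suc s"] by simp
  also have "\<dots> = Suc s * (k * ((M + Suc s) choose s))" unfolding assms by (simp only: mult.assoc mult.left_commute)
  finally show ?thesis by (metis mult_left_cancel nat.distinct(1))
qed

lemma P1:
  assumes k: "0 < k"
  shows "rr k (Suc M) h = (if h = 0 then 0 else rr k M (h-1)) + rr k (Suc M) (h+k)"
proof (cases "\<exists>s. Suc M = h + k*s")
  case False
  have a: "rr k (Suc M) h = 0" using False by (rule rr_zero)
  have b: "rr k (Suc M) (h+k) = 0"
    by (rule rr_zero) (metis False add.assoc mult_Suc_right)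
  have c: "h \<noteq> 0 \<Longrightarrow> rr k M (h-1) = 0"
    by (rule rr_zero) (use False in \<open>metis Suc_diff_1 add_Suc not_gr0\<close>)
  show ?thesis using a b c by simp
next
  case True
  then obtain s where s: "Suc M = h + k*s" by blast
  show ?thesis
  proof (cases s)
    case 0
    then have h: "h = Suc M" using s by simp
    have "rr k (Suc M) (h+k) = 0" by (rule rr_zero) (use h k in auto)
    moreover have "rr k M (h-1) = rr k (M + k*0) M" using h by simp
    ultimately show ?thesis using h k by (simp add: rr_eq[of k "Suc M" 0, simplified] rr_eq[of k M 0, simplified] rf_def)
  next
    case (Suc s')
    have e1: "rr k (Suc M) h = rf k (Suc M + s) s" using rr_eq[OF k, of h s] s by simp
    have e2: "rr k (Suc M) (h+k) = rf k (Suc M + s') s'"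
      using rr_eq[OF k, of "h+k" s'] s Suc by (simp add: algebra_simps)
    have X: "(if h = 0 then 0 else rr k M (h-1)) = rf k (M + s) s"
    proof (cases h)
      case 0
      then have "Suc M = k * Suc s'" using s Suc by simp
      from choose_zero_lemma[OF this] show ?thesis using 0 Suc by (simp add: rf_def)
    next
      case (Suc h')
      then have "M = h' + k*s" using s by simp
      then show ?thesis using rr_eq[OF k, of h' s] Suc by simp
    qed
    show ?thesis
      unfolding e1 e2 X using Suc
      by (cases s') (simp_all add: rf_def algebra_simps)
  qed
qed

lemma P2:
  assumes k: "0 < k"
  shows "tt k (Suc M) h = (if h = 0 then 0 else tt k M (h-1)) + tt k (Suc M) (h+k) + rr k M (h+k-1)"
proof (cases "\<exists>s. Suc M = h + k*s")
  case False
  have a: "tt k (Suc M) h = 0" using False by (rule tt_zero)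
  have b: "tt k (Suc M) (h+k) = 0"
    by (rule tt_zero) (metis False add.assoc mult_Suc_right)
  have c: "h \<noteq> 0 \<Longrightarrow> tt k M (h-1) = 0"
    by (rule tt_zero) (use False in \<open>metis Suc_diff_1 add_Suc not_gr0\<close>)
  have d: "rr k M (h+k-1) = 0"
  proof (rule rr_zero, rule notI)
    assume "\<exists>s. M = h + k - 1 + k * s"
    then obtain s where "M = h + k - 1 + k * s" by blast
    then have "Suc M = h + k * Suc s" using k by simp
    then show False using False by blast
  qed
  show ?thesis using a b c d by simp
next
  case True
  then obtain s where s: "Suc M = h + k*s" by blast
  show ?thesis
  proof (cases s)
    case 0
    then have h: "h = Suc M" using s by simp
    have "tt k (Suc M) (h+k) = 0" by (rule tt_zero) (use h k in auto)
    moreover have "rr k M (h+k-1) = 0" by (rule rr_zero) (use h k in auto)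
    moreover have "tt k M (h-1) = tt k (M + k*0) M" using h by simp
    ultimately show ?thesis using h k by (simp add: tt_eq[of k "Suc M" 0, simplified] tt_eq[of k M 0, simplified] tf_def)
  next
    case (Suc s')
    have e1: "tt k (Suc M) h = tf h (Suc M + s) s" using tt_eq[OF k, of h s] s by simp
    have e2: "tt k (Suc M) (h+k) = tf (h+k) (Suc M + s') s'"
      using tt_eq[OF k, of "h+k" s'] s Suc by (simp add: algebra_simps)
    have e3: "rr k M (h+k-1) = rf k (M + s') s'"
    proof -
      have "M = (h+k-1) + k*s'" using s Suc k by simp
      then show ?thesis using rr_eq[OF k, of "h+k-1" s'] by simp
    qed
    have X: "(if h = 0 then 0 else tt k M (h-1)) = int h * int ((M + s - 1) choose s')"
    proof (cases h)
      case 0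
      then show ?thesis by simp
    next
      case (Suc h')
      then have "M = h' + k*s" using s by simp
      then show ?thesis using tt_eq[OF k, of h' s] Suc \<open>s = Suc s'\<close> by (simp add: tf_def)
    qed
    show ?thesis
      unfolding e1 e2 e3 X using Suc
      by (cases s') (simp_all add: rf_def tf_def algebra_simps)
  qed
qed

lemma L1aux:
  assumes k: "0 < k"
  shows "rr k (Suc M) (h+k) = (\<Sum>j\<in>{1..J}. rr k M (h + k*j - 1)) + rr k (Suc M) (h + k * Suc J)"
proof (induction J)
  case 0
  then show ?case by simp
next
  case (Suc J)
  have "rr k (Suc M) (h + k * Suc J) = rr k M (h + k * Suc J - 1) + rr k (Suc M) (h + k * Suc (Suc J))"
    using P1[OF k, of M "h + k * Suc J"] k by (simp add: algebra_simps)
  then show ?case using Suc by simp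
qed

lemma rr_big: "0 < k \<Longrightarrow> N < h \<Longrightarrow> rr k N h = 0"
  by (rule rr_zero) auto

lemma tt_big: "0 < k \<Longrightarrow> N < h \<Longrightarrow> tt k N h = 0"
  by (rule tt_zero) auto

lemma big_aux: "0 < (k::nat) \<Longrightarrow> Suc M < h + k * Suc (Suc M)"
  using Nat.lessE mult.left_commute n_less_m_mult_n nat_mult_less_cancel_disj by fastforce

lemma L1:
  assumes k: "0 < k"
  shows "rr k (Suc M) h = (if h = 0 then 0 else rr k M (h-1)) + (\<Sum>j\<in>{1..Suc M}. rr k M (h + k*j - 1))"
proof -
  have "rr k (Suc M) (h + k * Suc (Suc M)) = 0"
    by (rule rr_big[OF k]) (use big_aux[OF k, of M h] in simp)
  then show ?thesis using P1[OF k, of M h] L1aux[OF k, of M h "Suc M"] by simp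
qed

lemma L2aux:
  assumes k: "0 < k"
  shows "tt k (Suc M) (h+k) + rr k M (h+k-1) = (\<Sum>j\<in>{1..J}. tt k M (h + k*j - 1) + rr k M (h + k*j - 1)) + tt k (Suc M) (h + k * Suc J) + rr k M (h + k * Suc J - 1)"
proof (induction J)
  case 0
  then show ?case by simp
next
  case (Suc J)
  have "tt k (Suc M) (h + k * Suc J) = tt k M (h + k * Suc J - 1) + tt k (Suc M) (h + k * Suc (Suc J)) + rr k M (h + k * Suc (Suc J) - 1)"
    using P2[OF k, of M "h + k * Suc J"] k by (simp add: algebra_simps)
  then show ?case using Suc by simp
qed

lemma L2:
  assumes k: "0 < k"
  shows "tt k (Suc M) h = (if h = 0 then 0 else tt k M (h-1)) + (\<Sum>j\<in>{1..Suc M}. tt k M (h + k*j - 1) + rr k M (h + k*j - 1))"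
proof -
  have "tt k (Suc M) (h + k * Suc (Suc M)) = 0"
    by (rule tt_big[OF k]) (use big_aux[OF k, of M h] in simp)
  moreover have "rr k M (h + k * Suc (Suc M) - 1) = 0"
    by (rule rr_big[OF k]) (use big_aux[OF k, of M h] in linarith)
  moreover have "tt k (Suc M) h = (if h = 0 then 0 else tt k M (h-1)) + tt k (Suc M) (h+k) + rr k M (h+k-1)"
    by (rule P2[OF k])
  ultimately show ?thesis using L2aux[OF k, of M h "Suc M"] by simp
qed



definition upclosed :: "nat set \<Rightarrow> nat set \<Rightarrow> bool" where
  "upclosed U A \<longleftrightarrow> U \<subseteq> A \<and> (\<forall>x\<in>U. \<forall>y\<in>A. x < y \<longrightarrow> y \<in> U)"

definition upk :: "nat set \<Rightarrow> nat \<Rightarrow> nat set" where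
  "upk A m = {x\<in>A. card {y\<in>A. x < y} < m}"

lemma upclosed_char:
  assumes "finite A" "upclosed U A"
  shows "U = upk A (card U)"
proof (intro set_eqI iffI)
  fix x assume x: "x \<in> U"
  have fU: "finite U" using assms finite_subset unfolding upclosed_def by blast
  have "{y\<in>A. x < y} \<subseteq> U - {x}" using assms x unfolding upclosed_def by auto
  then have "card {y\<in>A. x < y} \<le> card (U - {x})" using fU by (intro card_mono) auto
  also have "\<dots> < card U" using fU x by (metis card_Diff1_less)
  finally show "x \<in> upk A (card U)" using x assms unfolding upk_def upclosed_def by auto
next
  fix x assume x: "x \<in> upk A (card U)"
  show "x \<in> U"
  proof (rule ccontr)
    assume nx: "x \<notin> U"
    have "U \<subseteq> {y\<in>A. x < y}"
    proof
      fix u assume u: "u \<in> U"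
      have "u \<noteq> x" using u nx by auto
      moreover have "\<not> u < x" using u nx x assms unfolding upclosed_def upk_def by auto
      ultimately show "u \<in> {y\<in>A. x < y}" using u assms unfolding upclosed_def by auto
    qed
    then have "card U \<le> card {y\<in>A. x < y}" using assms by (intro card_mono) auto
    then show False using x unfolding upk_def by auto
  qed
qed

lemma upclosed_exists:
  assumes "finite A" "m \<le> card A"
  shows "\<exists>U. upclosed U A \<and> card U = m"
  using assms(2)
proof (induction m)
  case 0
  then show ?case by (auto simp: upclosed_def intro!: exI[of _ "{}"])
next
  case (Suc m)
  then obtain U where U: "upclosed U A" "card U = m" by auto
  have fU: "finite U" using U assms finite_subset unfolding upclosed_def by blast
  have "U \<noteq> A" using U Suc by auto
  then have ne: "A - U \<noteq> {}" using U unfolding upclosed_def by auto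
  define z where "z = Max (A - U)"
  have z: "z \<in> A - U" using ne assms unfolding z_def by (intro Max_in) auto
  have zmax: "\<And>y. y \<in> A - U \<Longrightarrow> y \<le> z" using assms unfolding z_def by auto
  have "upclosed (insert z U) A"
    unfolding upclosed_def
  proof (intro conjI ballI impI)
    show "insert z U \<subseteq> A" using z U unfolding upclosed_def by auto
  next
    fix x y assume x: "x \<in> insert z U" and y: "y \<in> A" and xy: "x < y"
    show "y \<in> insert z U"
    proof (cases "x = z")
      case True
      then show ?thesis using zmax[of y] y xy by force
    next
      case False
      then show ?thesis using x y xy U unfolding upclosed_def by auto
    qed
  qed
  moreover have "card (insert z U) = Suc m" using z fU U by auto
  ultimately show ?case by blast
qed

lemma upk_props:
  assumes "finite A" "m \<le> card A"
  shows "upclosed (upk A m) A" "card (upk A m) = m"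
proof -
  obtain U where U: "upclosed U A" "card U = m" using upclosed_exists[OF assms] by blast
  have e: "upk A m = U" using upclosed_char[OF assms(1) U(1)] U(2) by simp
  show "upclosed (upk A m) A" unfolding e by (rule U(1))
  show "card (upk A m) = m" unfolding e by (rule U(2))
qed

definition blk :: "nat set set \<Rightarrow> nat \<Rightarrow> nat set" where
  "blk P x = (THE B. B \<in> P \<and> x \<in> B)"

lemma blk_eq:
  assumes "disjoint P" "B \<in> P" "x \<in> B"
  shows "blk P x = B"
  unfolding blk_def
  using assms unfolding disjoint_def by (intro the_equality) blast+

definition partial :: "nat \<Rightarrow> nat \<Rightarrow> nat set set \<Rightarrow> nat set \<Rightarrow> bool" where
  "partial k N P Q \<longleftrightarrow> Q \<subseteq> {1..N} \<and> partition_on ({1..N} - Q) P \<and> noncrossing P \<and>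
     (\<forall>B\<in>P. k dvd card B) \<and> (\<forall>u\<in>Q. \<forall>B\<in>P. \<forall>b\<in>B. \<forall>b'\<in>B. \<not> (b < u \<and> u < b'))"

definition st :: "nat \<Rightarrow> nat \<Rightarrow> nat \<Rightarrow> (nat set set \<times> nat set) set" where
  "st k N h = {(P, Q). partial k N P Q \<and> card Q = h}"

lemma noncrossing_mono: "noncrossing P \<Longrightarrow> Q \<subseteq> P \<Longrightarrow> noncrossing Q"
  unfolding noncrossing_def by (smt (verit) subsetD)

lemma partial_sub: "partial k N P Q \<Longrightarrow> B \<in> P \<Longrightarrow> B \<subseteq> {1..N} - Q"
proof -
  assume "partial k N P Q" "B \<in> P"
  then have "\<Union>P = {1..N} - Q" "B \<subseteq> \<Union>P" unfolding partial_def partition_on_def by auto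
  then show ?thesis by simp
qed

lemma partial_fin: "partial k N P Q \<Longrightarrow> P \<subseteq> Pow {1..N}"
proof
  fix B assume "partial k N P Q" "B \<in> P"
  then have "B \<subseteq> {1..N} - Q" by (rule partial_sub)
  then show "B \<in> Pow {1..N}" by auto
qed

lemma finite_st: "finite (st k N h)"
proof -
  have "st k N h \<subseteq> Pow (Pow {1..N}) \<times> Pow {1..N}"
  proof (intro subsetI)
    fix x assume "x \<in> st k N h"
    then obtain P Q where x: "x = (P, Q)" and pq: "partial k N P Q" by (auto simp: st_def)
    from pq have "P \<subseteq> Pow {1..N}" by (rule partial_fin)
    moreover have "Q \<subseteq> {1..N}" using pq by (simp add: partial_def)
    ultimately show "x \<in> Pow (Pow {1..N}) \<times> Pow {1..N}" using x by simp
  qed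
  then show ?thesis by (rule finite_subset) auto
qed

lemma st_zero: "st k 0 h = (if h = 0 then {({}, {})} else {})"
proof -
  have eq: "partial k 0 P Q \<longleftrightarrow> P = {} \<and> Q = {}" for P Q
  proof
    assume "partial k 0 P Q"
    then have "Q \<subseteq> {}" "partition_on ({} - Q) P" unfolding partial_def by auto
    then show "P = {} \<and> Q = {}" by (simp add: partition_on_empty)
  next
    assume "P = {} \<and> Q = {}"
    moreover have "noncrossing {}" unfolding noncrossing_def by simp
    moreover have "partition_on ({1..0::nat} - {}) {}" by (simp add: partition_on_def)
    ultimately show "partial k 0 P Q" unfolding partial_def by simp
  qed
  show ?thesis unfolding st_def eq
    by (cases "h = 0") (auto)
qed

lemma partialI:
  assumes "Q \<subseteq> {1..N}" "partition_on ({1..N} - Q) P" "noncrossing P"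
    "\<And>B. B \<in> P \<Longrightarrow> k dvd card B"
    "\<And>u B b b'. u \<in> Q \<Longrightarrow> B \<in> P \<Longrightarrow> b \<in> B \<Longrightarrow> b' \<in> B \<Longrightarrow> b < u \<Longrightarrow> u < b' \<Longrightarrow> False"
  shows "partial k N P Q"
  unfolding partial_def
  apply (intro conjI assms(1-3) ballI notI)
  using assms(4,5) by blast+

lemma partialD:
  assumes "partial k N P Q"
  shows "Q \<subseteq> {1..N}" "partition_on ({1..N} - Q) P" "noncrossing P" "\<Union>P = {1..N} - Q"
    "disjoint P" "{} \<notin> P"
proof -
  have a: "Q \<subseteq> {1..N}" "partition_on ({1..N} - Q) P" "noncrossing P" using assms unfolding partial_def by simp_all
  then show "Q \<subseteq> {1..N}" "partition_on ({1..N} - Q) P" "noncrossing P" by simp_all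
  show "\<Union>P = {1..N} - Q" "disjoint P" "{} \<notin> P" using a(2) unfolding partition_on_def by simp_all
qed

lemma partial_dvd: "partial k N P Q \<Longrightarrow> B \<in> P \<Longrightarrow> k dvd card B"
  unfolding partial_def by simp

lemma partial_open: "partial k N P Q \<Longrightarrow> u \<in> Q \<Longrightarrow> B \<in> P \<Longrightarrow> b \<in> B \<Longrightarrow> b' \<in> B \<Longrightarrow> b < u \<Longrightarrow> u < b' \<Longrightarrow> False"
  unfolding partial_def by (meson)

lemma noncrossingD:
  "noncrossing P \<Longrightarrow> X \<in> P \<Longrightarrow> Y \<in> P \<Longrightarrow> X \<noteq> Y \<Longrightarrow> a < b \<Longrightarrow> b < c \<Longrightarrow> c < d \<Longrightarrow>
   a \<in> X \<Longrightarrow> c \<in> X \<Longrightarrow> b \<in> Y \<Longrightarrow> d \<in> Y \<Longrightarrow> False"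
  unfolding noncrossing_def by meson

lemma noncrossingI:
  assumes "\<And>X Y a b c d. X \<in> P \<Longrightarrow> Y \<in> P \<Longrightarrow> X \<noteq> Y \<Longrightarrow> a < b \<Longrightarrow> b < c \<Longrightarrow> c < d \<Longrightarrow>
   a \<in> X \<Longrightarrow> c \<in> X \<Longrightarrow> b \<in> Y \<Longrightarrow> d \<in> Y \<Longrightarrow> False"
  shows "noncrossing P"
  unfolding noncrossing_def using assms by meson

lemma st_iff: "(P, Q) \<in> st k N h \<longleftrightarrow> partial k N P Q \<and> card Q = h"
  by (simp add: st_def)

definition gj :: "nat \<Rightarrow> nat \<Rightarrow> nat set set \<times> nat set \<Rightarrow> nat set set \<times> nat set" where
  "gj M K y = (insert (insert (Suc M) (upk (snd y) (K - 1))) (fst y), snd y - upk (snd y) (K - 1))"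

definition fj :: "nat \<Rightarrow> nat set set \<times> nat set \<Rightarrow> nat set set \<times> nat set" where
  "fj M x = (fst x - {blk (fst x) (Suc M)}, snd x \<union> (blk (fst x) (Suc M) - {Suc M}))"

definition fib :: "nat \<Rightarrow> nat \<Rightarrow> nat \<Rightarrow> nat \<Rightarrow> (nat set set \<times> nat set) set" where
  "fib k N h K = {x \<in> st k N h. N \<notin> snd x \<and> card (blk (fst x) N) = K}"

lemma g_into:
  assumes y: "(P', Q') \<in> st k M (h + K - 1)" and K: "0 < K" "k dvd K"
  shows "gj M K (P', Q') \<in> fib k (Suc M) h K \<and> fj M (gj M K (P', Q')) = (P', Q')"
proof -
  define N where "N = Suc M"
  define U where "U = upk Q' (K - 1)"
  define B where "B = insert N U"
  have pp: "partial k M P' Q'" and cQ: "card Q' = h + K - 1" using y by (auto simp: st_iff)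
  have Qsub: "Q' \<subseteq> {1..M}" using partialD(1)[OF pp] .
  have finQ: "finite Q'" using Qsub finite_subset by blast
  have UP: "upclosed U Q'" "card U = K - 1"
    using upk_props[OF finQ, of "K-1"] cQ unfolding U_def by auto
  have UQ: "U \<subseteq> Q'" using UP unfolding upclosed_def by auto
  have finU: "finite U" using finQ UQ finite_subset by blast
  have NQ: "N \<notin> Q'" using Qsub unfolding N_def by auto
  have NU: "N \<notin> U" using NQ UQ by auto
  have UnP: "\<Union>P' = {1..M} - Q'" using partialD(4)[OF pp] .
  have Csub: "C \<subseteq> {1..M} - Q'" if "C \<in> P'" for C using that UnP by auto
  have BnP: "B \<notin> P'"
  proof
    assume "B \<in> P'"
    then have "N \<in> {1..M}" using Csub unfolding B_def by blast
    then show False unfolding N_def by simp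
  qed
  have cB: "card B = K" unfolding B_def using finU NU UP K by simp
  have disj: "disjnt B (\<Union>P')" unfolding B_def disjnt_def using UnP UQ NQ unfolding N_def by auto
  have seteq: "{1..N} - (Q' - U) - B = {1..M} - Q'"
    unfolding B_def N_def using UQ Qsub by auto
  have part: "partition_on ({1..N} - (Q' - U)) (insert B P')"
  proof -
    have "partition_on ({1..N} - (Q' - U) - B) P'" unfolding seteq using partialD(2)[OF pp] .
    moreover have "B \<subseteq> {1..N} - (Q' - U)" unfolding B_def N_def using UQ Qsub by auto
    moreover have "B \<noteq> {}" unfolding B_def by auto
    ultimately show ?thesis using partition_on_insert[OF disj] by blast
  qed
  have nc: "noncrossing (insert B P')"
  proof (rule noncrossingI)
    fix X Y a b c d
    assume X: "X \<in> insert B P'" and Y: "Y \<in> insert B P'" and XY: "X \<noteq> Y"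
      and abcd: "a < b" "b < c" "c < d" and ac: "a \<in> X" "c \<in> X" and bd: "b \<in> Y" "d \<in> Y"
    show False
    proof (cases "X = B")
      case True
      then have Y': "Y \<in> P'" using Y XY by auto
      have "d \<le> M" using Csub[OF Y'] bd by auto
      then have "c \<noteq> N" using abcd unfolding N_def by auto
      then have "c \<in> Q'" using ac True UQ unfolding B_def by auto
      then show False using partial_open[OF pp \<open>c \<in> Q'\<close> Y' bd(1) bd(2)] abcd by auto
    next
      case False
      then have X': "X \<in> P'" using X by auto
      show False
      proof (cases "Y = B")
        case True
        have "c \<le> M" using Csub[OF X'] ac by auto
        then have "b \<noteq> N" using abcd unfolding N_def by auto
        then have "b \<in> Q'" using bd True UQ unfolding B_def by auto
        then show False using partial_open[OF pp \<open>b \<in> Q'\<close> X' ac(1) ac(2)] abcd by auto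
      next
        case False
        then have "Y \<in> P'" using Y by auto
        then show False using noncrossingD[OF partialD(3)[OF pp] X' _ XY abcd ac bd] by auto
      qed
    qed
  qed
  have pN: "partial k N (insert B P') (Q' - U)"
  proof (rule partialI)
    show "Q' - U \<subseteq> {1..N}" using Qsub unfolding N_def by auto
    show "partition_on ({1..N} - (Q' - U)) (insert B P')" by (rule part)
    show "noncrossing (insert B P')" by (rule nc)
    fix C assume "C \<in> insert B P'"
    then show "k dvd card C" using partial_dvd[OF pp] cB K by auto
  next
    fix u C b b' assume u: "u \<in> Q' - U" and C: "C \<in> insert B P'" and b: "b \<in> C" "b' \<in> C"
      and bu: "b < u" "u < b'"
    show False
    proof (cases "C = B")
      case True
      have "u \<le> M" using u Qsub by auto
      then have "b \<in> U" using b True bu unfolding B_def N_def by auto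
      then show False using u bu UP(1) unfolding upclosed_def by auto
    next
      case False
      then show False using partial_open[OF pp _ _ b bu] u C by auto
    qed
  qed
  have cQU: "card (Q' - U) = h" using cQ UP finU UQ K by (simp add: card_Diff_subset)
  have blkB: "blk (insert B P') N = B"
    by (rule blk_eq[OF partialD(5)[OF pN]]) (auto simp: B_def)
  have g: "gj M K (P', Q') = (insert B P', Q' - U)" unfolding gj_def B_def U_def N_def by simp
  have "gj M K (P', Q') \<in> fib k (Suc M) h K"
    unfolding g fib_def using pN cQU blkB cB NQ by (auto simp: st_iff N_def)
  moreover have "fj M (gj M K (P', Q')) = (P', Q')"
  proof -
    have "insert B P' - {B} = P'" using BnP by auto
    moreover have "Q' - U \<union> (B - {N}) = Q'" unfolding B_def using UQ NU by auto
    ultimately show ?thesis unfolding g fj_def using blkB by (simp add: N_def)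
  qed
  ultimately show ?thesis ..
qed

lemma f_into:
  assumes x: "x \<in> fib k (Suc M) h K"
  shows "fj M x \<in> st k M (h + K - 1) \<and> gj M K (fj M x) = x"
proof -
  define N where "N = Suc M"
  obtain P Q where xPQ: "x = (P, Q)" by (cases x)
  have pp: "partial k N P Q" and cQ: "card Q = h" and NQ: "N \<notin> Q" and cK: "card (blk P N) = K"
    using x unfolding fib_def xPQ N_def by (auto simp: st_iff)
  have Qsub: "Q \<subseteq> {1..N}" using partialD(1)[OF pp] .
  have UnP: "\<Union>P = {1..N} - Q" using partialD(4)[OF pp] .
  have "N \<in> \<Union>P" using UnP NQ unfolding N_def by auto
  then obtain B where B: "B \<in> P" "N \<in> B" by blast
  have blkB: "blk P N = B" using blk_eq[OF partialD(5)[OF pp] B] .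
  have cB: "card B = K" using cK blkB by simp
  have Bsub: "B \<subseteq> {1..N} - Q" using partial_sub[OF pp B(1)] .
  have finB: "finite B" using Bsub finite_subset by blast
  have finQ: "finite Q" using Qsub finite_subset by blast
  define P' where "P' = P - {B}"
  define Q' where "Q' = Q \<union> (B - {N})"
  have fx: "fj M x = (P', Q')" using blkB unfolding fj_def xPQ P'_def Q'_def N_def by simp
  have PeqI: "P = insert B P'" unfolding P'_def using B by auto
  have Csub: "C \<subseteq> {1..N} - Q" if "C \<in> P" for C using partial_sub[OF pp that] .
  have NC: "N \<notin> C" if "C \<in> P'" for C
  proof
    assume "N \<in> C"
    have "C \<in> P" "C \<noteq> B" using that unfolding P'_def by auto
    then have "C \<inter> B = {}" using disjointD[OF partialD(5)[OF pp] _ B(1)] by blast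
    then show False using \<open>N \<in> C\<close> B by auto
  qed
  have disj: "disjnt B (\<Union>P')"
    unfolding disjnt_def
  proof (rule equals0I)
    fix z assume "z \<in> B \<inter> \<Union>P'"
    then obtain C where "z \<in> B" "C \<in> P'" "z \<in> C" by blast
    then have "C \<in> P" "C \<noteq> B" unfolding P'_def by auto
    then have "C \<inter> B = {}" using disjointD[OF partialD(5)[OF pp] _ B(1)] by blast
    then show False using \<open>z \<in> B\<close> \<open>z \<in> C\<close> by auto
  qed
  have Q'sub: "Q' \<subseteq> {1..M}"
  proof
    fix z assume z: "z \<in> Q'"
    then have "z \<in> {1..N}" "z \<noteq> N" using Qsub NQ Bsub unfolding Q'_def by auto
    then show "z \<in> {1..M}" unfolding N_def by auto
  qed
  have seteq: "{1..N} - Q - B = {1..M} - Q'" unfolding Q'_def N_def using B(2) unfolding N_def by (auto simp: le_Suc_eq)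
  have part: "partition_on ({1..M} - Q') P'"
  proof -
    have "partition_on ({1..N} - Q) (insert B P')" using partialD(2)[OF pp] PeqI by simp
    then show ?thesis using partition_on_insert[OF disj] seteq by simp
  qed
  have pM: "partial k M P' Q'"
  proof (rule partialI)
    show "Q' \<subseteq> {1..M}" by (rule Q'sub)
    show "partition_on ({1..M} - Q') P'" by (rule part)
    show "noncrossing P'" using noncrossing_mono[OF partialD(3)[OF pp]] unfolding P'_def by blast
    fix C assume "C \<in> P'"
    then show "k dvd card C" using partial_dvd[OF pp] unfolding P'_def by blast
  next
    fix u C b b' assume u: "u \<in> Q'" and C: "C \<in> P'" and b: "b \<in> C" "b' \<in> C"
      and bu: "b < u" "u < b'"
    have CP: "C \<in> P" "C \<noteq> B" using C unfolding P'_def by auto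
    show False
    proof (cases "u \<in> Q")
      case True
      show False using partial_open[OF pp True CP(1) b bu] .
    next
      case False
      then have uB: "u \<in> B" using u unfolding Q'_def by auto
      have "b' \<le> N" using Csub[OF CP(1)] b by auto
      moreover have "b' \<noteq> N" using NC[OF C] b by auto
      ultimately have "b' < N" by simp
      show False using noncrossingD[OF partialD(3)[OF pp] CP(1) B(1) CP(2) bu \<open>b' < N\<close> b(1) b(2) uB B(2)] .
    qed
  qed
  have QB: "Q \<inter> B = {}" using Bsub by auto
  have cQ': "card Q' = h + K - 1"
  proof -
    have "card Q' = card Q + card (B - {N})" unfolding Q'_def
      using finQ finB QB by (intro card_Un_disjoint) auto
    moreover have "K > 0" using cB B(2) finB card_gt_0_iff by blast
    ultimately show ?thesis using cQ cB B(2) finB by simp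
  qed
  have up: "upclosed (B - {N}) Q'"
    unfolding upclosed_def
  proof (intro conjI ballI impI)
    show "B - {N} \<subseteq> Q'" unfolding Q'_def by auto
  next
    fix z y assume z: "z \<in> B - {N}" and y: "y \<in> Q'" and zy: "z < y"
    show "y \<in> B - {N}"
    proof (rule ccontr)
      assume "y \<notin> B - {N}"
      then have yQ: "y \<in> Q" using y unfolding Q'_def by auto
      then have "y < N" using Qsub NQ by (metis atLeastAtMost_iff le_neq_implies_less subsetD)
      then show False using partial_open[OF pp yQ B(1) _ B(2) zy] z by auto
    qed
  qed
  have finQ': "finite Q'" using Q'sub finite_subset by blast
  have U: "upk Q' (K - 1) = B - {N}"
    using upclosed_char[OF finQ' up] cB B(2) finB by simp
  have "gj M K (P', Q') = (insert B P', Q' - (B - {N}))"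
    unfolding gj_def fst_conv snd_conv U N_def[symmetric] using B(2) by (simp add: insert_absorb)
  also have "\<dots> = x" unfolding xPQ using PeqI QB unfolding Q'_def by auto
  finally show ?thesis using fx pM cQ' by (simp add: st_iff)
qed

definition g0 :: "nat \<Rightarrow> nat set set \<times> nat set \<Rightarrow> nat set set \<times> nat set" where
  "g0 M y = (fst y, insert (Suc M) (snd y))"

definition f0 :: "nat \<Rightarrow> nat set set \<times> nat set \<Rightarrow> nat set set \<times> nat set" where
  "f0 M x = (fst x, snd x - {Suc M})"

definition fib0 :: "nat \<Rightarrow> nat \<Rightarrow> nat \<Rightarrow> (nat set set \<times> nat set) set" where
  "fib0 k N h = {x \<in> st k N h. N \<in> snd x}"

lemma g0_into:
  assumes y: "(P', Q') \<in> st k M h"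
  shows "g0 M (P', Q') \<in> fib0 k (Suc M) (Suc h) \<and> f0 M (g0 M (P', Q')) = (P', Q')"
proof -
  define N where "N = Suc M"
  have pp: "partial k M P' Q'" and cQ: "card Q' = h" using y by (auto simp: st_iff)
  have Qsub: "Q' \<subseteq> {1..M}" using partialD(1)[OF pp] .
  have finQ: "finite Q'" using Qsub finite_subset by blast
  have NQ: "N \<notin> Q'" using Qsub unfolding N_def by auto
  have seteq: "{1..N} - insert N Q' = {1..M} - Q'" unfolding N_def by (auto simp: le_Suc_eq)
  have pN: "partial k N P' (insert N Q')"
  proof (rule partialI)
    show "insert N Q' \<subseteq> {1..N}" using Qsub unfolding N_def by auto
    show "partition_on ({1..N} - insert N Q') P'" unfolding seteq by (rule partialD(2)[OF pp])
    show "noncrossing P'" by (rule partialD(3)[OF pp])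
    fix C assume "C \<in> P'"
    then show "k dvd card C" using partial_dvd[OF pp] by blast
  next
    fix u C b b' assume u: "u \<in> insert N Q'" and C: "C \<in> P'" and b: "b \<in> C" "b' \<in> C"
      and bu: "b < u" "u < b'"
    show False
    proof (cases "u = N")
      case True
      have "b' \<le> M" using partial_sub[OF pp C] b by auto
      then show False using True bu unfolding N_def by auto
    next
      case False
      then have "u \<in> Q'" using u by auto
      show False using partial_open[OF pp \<open>u \<in> Q'\<close> C b bu] .
    qed
  qed
  have "card (insert N Q') = Suc h" using finQ NQ cQ by simp
  then have "g0 M (P', Q') \<in> fib0 k (Suc M) (Suc h)"
    unfolding g0_def fib0_def using pN by (simp add: st_iff N_def)
  moreover have "f0 M (g0 M (P', Q')) = (P', Q')" unfolding f0_def g0_def using NQ by (simp add: N_def)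
  ultimately show ?thesis ..
qed

lemma f0_into:
  assumes x: "x \<in> fib0 k (Suc M) h"
  shows "0 < h \<and> f0 M x \<in> st k M (h - 1) \<and> g0 M (f0 M x) = x"
proof -
  define N where "N = Suc M"
  obtain P Q where xPQ: "x = (P, Q)" by (cases x)
  have pp: "partial k N P Q" and cQ: "card Q = h" and NQ: "N \<in> Q"
    using x unfolding fib0_def xPQ N_def by (auto simp: st_iff)
  have Qsub: "Q \<subseteq> {1..N}" using partialD(1)[OF pp] .
  have finQ: "finite Q" using Qsub finite_subset by blast
  have h: "0 < h" using cQ NQ finQ card_gt_0_iff by blast
  have seteq: "{1..M} - (Q - {N}) = {1..N} - Q" using NQ Qsub unfolding N_def by (auto simp: le_Suc_eq)
  have pM: "partial k M P (Q - {N})"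
  proof (rule partialI)
    show "Q - {N} \<subseteq> {1..M}"
    proof
      fix z assume "z \<in> Q - {N}"
      then have "z \<in> {1..N}" "z \<noteq> N" using Qsub by auto
      then show "z \<in> {1..M}" unfolding N_def by auto
    qed
    show "partition_on ({1..M} - (Q - {N})) P" unfolding seteq by (rule partialD(2)[OF pp])
    show "noncrossing P" by (rule partialD(3)[OF pp])
    fix C assume "C \<in> P"
    then show "k dvd card C" using partial_dvd[OF pp] by blast
  next
    fix u C b b' assume u: "u \<in> Q - {N}" and C: "C \<in> P" and b: "b \<in> C" "b' \<in> C"
      and bu: "b < u" "u < b'"
    have "u \<in> Q" using u by auto
    show False using partial_open[OF pp \<open>u \<in> Q\<close> C b bu] .
  qed
  have "card (Q - {N}) = h - 1" using cQ NQ finQ by simp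
  then have "f0 M x \<in> st k M (h - 1)" unfolding f0_def xPQ using pM by (simp add: st_iff N_def)
  moreover have "g0 M (f0 M x) = x" unfolding f0_def g0_def xPQ using NQ by (simp add: N_def insert_absorb)
  ultimately show ?thesis using h by blast
qed

lemma bij_fib:
  assumes "0 < K" "k dvd K"
  shows "bij_betw (gj M K) (st k M (h + K - 1)) (fib k (Suc M) h K)"
proof (rule bij_betw_byWitness[where f' = "fj M"])
  show "\<forall>a\<in>st k M (h + K - 1). fj M (gj M K a) = a" using g_into[OF _ assms] by auto
  show "\<forall>a'\<in>fib k (Suc M) h K. gj M K (fj M a') = a'" using f_into by blast
  show "gj M K ` st k M (h + K - 1) \<subseteq> fib k (Suc M) h K" using g_into[OF _ assms] by auto
  show "fj M ` fib k (Suc M) h K \<subseteq> st k M (h + K - 1)" using f_into by blast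
qed

lemma bij_fib0:
  shows "bij_betw (g0 M) (st k M h) (fib0 k (Suc M) (Suc h))"
proof (rule bij_betw_byWitness[where f' = "f0 M"])
  show "\<forall>a\<in>st k M h. f0 M (g0 M a) = a" using g0_into by auto
  show "\<forall>a'\<in>fib0 k (Suc M) (Suc h). g0 M (f0 M a') = a'" using f0_into by blast
  show "g0 M ` st k M h \<subseteq> fib0 k (Suc M) (Suc h)" using g0_into by auto
  show "f0 M ` fib0 k (Suc M) (Suc h) \<subseteq> st k M h" using f0_into by fastforce
qed

lemma fib0_zero: "fib0 k (Suc M) 0 = {}"
  using f0_into by blast

lemma card_gj:
  assumes "y \<in> st k M h'"
  shows "card (fst (gj M K y)) = Suc (card (fst y))"
proof -
  obtain P' Q' where y: "y = (P', Q')" by (cases y)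
  have pp: "partial k M P' Q'" using assms y by (simp add: st_iff)
  have sub: "P' \<subseteq> Pow {1..M}" using partial_fin[OF pp] .
  then have fin: "finite P'" by (rule finite_subset) auto
  have "insert (Suc M) (upk Q' (K - 1)) \<notin> P'" using sub by auto
  then show ?thesis unfolding y gj_def using fin by simp
qed

lemma blk_facts:
  assumes pp: "partial k N P Q" and N: "0 < N" and NQ: "N \<notin> Q"
  shows "blk P N \<in> P" "N \<in> blk P N" "k dvd card (blk P N)" "0 < card (blk P N)" "card (blk P N) \<le> N"
proof -
  have "N \<in> \<Union>P" using partialD(4)[OF pp] NQ N by auto
  then obtain B where B: "B \<in> P" "N \<in> B" by blast
  have e: "blk P N = B" using blk_eq[OF partialD(5)[OF pp] B] .
  have Bsub: "B \<subseteq> {1..N}" using partial_sub[OF pp B(1)] by auto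
  have finB: "finite B" using Bsub finite_subset by blast
  show "blk P N \<in> P" "N \<in> blk P N" using B e by auto
  show "k dvd card (blk P N)" using partial_dvd[OF pp B(1)] e by simp
  show "0 < card (blk P N)" using B finB e card_gt_0_iff by blast
  have "card B \<le> card {1..N}" using Bsub by (intro card_mono) auto
  then show "card (blk P N) \<le> N" using e by simp
qed

lemma decomp:
  assumes k: "0 < k"
  shows "(\<Sum>x\<in>st k (Suc M) h. F (fst x)) =
    (if h = 0 then 0 else (\<Sum>y\<in>st k M (h - 1). F (fst y))) +
    (\<Sum>j\<in>{1..Suc M}. \<Sum>y\<in>st k M (h + k*j - 1). F (fst (gj M (k*j) y)))"
proof -
  define N where "N = Suc M"
  define S where "S = st k N h"
  define cls where "cls x = (if N \<in> snd x then 0 else card (blk (fst x) N) div k)" for x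
  have finS: "finite S" unfolding S_def by (rule finite_st)
  have facts: "blk P N \<in> P \<and> N \<in> blk P N \<and> k dvd card (blk P N) \<and> 0 < card (blk P N) \<and> card (blk P N) \<le> N"
    if "(P, Q) \<in> S" "N \<notin> Q" for P Q
    using blk_facts[of k N P Q] that unfolding S_def N_def by (auto simp: st_iff)
  have img: "cls ` S \<subseteq> {0..N}"
  proof
    fix z assume "z \<in> cls ` S"
    then obtain P Q where PQ: "(P, Q) \<in> S" and z: "z = cls (P, Q)" by auto
    show "z \<in> {0..N}"
    proof (cases "N \<in> Q")
      case True then show ?thesis using z unfolding cls_def by simp
    next
      case False
      then have "card (blk P N) \<le> N" using facts[OF PQ] by blast
      then have "card (blk P N) div k \<le> N" using div_le_dividend le_trans by blast
      then show ?thesis using z False unfolding cls_def by simp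
    qed
  qed
  have fb0: "{x\<in>S. cls x = 0} = fib0 k N h"
  proof -
    have "cls x = 0 \<longleftrightarrow> N \<in> snd x" if "x \<in> S" for x
    proof -
      obtain P Q where x: "x = (P, Q)" by (cases x)
      show ?thesis
      proof (cases "N \<in> Q")
        case False
        then have f: "k dvd card (blk P N)" "0 < card (blk P N)" using facts that x by auto
        then have "card (blk P N) div k \<noteq> 0" using k by (auto elim!: dvdE)
        then show ?thesis using False x unfolding cls_def by simp
      qed (use x in \<open>simp add: cls_def\<close>)
    qed
    then show ?thesis unfolding fib0_def S_def by auto
  qed
  have fbj: "{x\<in>S. cls x = j} = fib k N h (k*j)" if j: "1 \<le> j" for j
  proof -
    have "cls x = j \<longleftrightarrow> N \<notin> snd x \<and> card (blk (fst x) N) = k * j" if "x \<in> S" for x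
    proof -
      obtain P Q where x: "x = (P, Q)" by (cases x)
      show ?thesis
      proof (cases "N \<in> Q")
        case False
        then have f: "k dvd card (blk P N)" using facts that x by auto
        then have "card (blk P N) div k = j \<longleftrightarrow> card (blk P N) = k * j" using k by (auto elim!: dvdE)
        then show ?thesis using False x unfolding cls_def by simp
      qed (use x j in \<open>simp add: cls_def\<close>)
    qed
    then show ?thesis unfolding fib_def S_def by auto
  qed
  have "(\<Sum>x\<in>S. F (fst x)) = (\<Sum>j\<in>{0..N}. \<Sum>x\<in>{x\<in>S. cls x = j}. F (fst x))"
    using sum.group[OF finS _ img, of "\<lambda>x. F (fst x)"] by simp
  also have "\<dots> = (\<Sum>x\<in>{x\<in>S. cls x = 0}. F (fst x)) + (\<Sum>j\<in>{1..N}. \<Sum>x\<in>{x\<in>S. cls x = j}. F (fst x))"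
    by (simp add: sum.atLeast_Suc_atMost)
  also have "(\<Sum>x\<in>{x\<in>S. cls x = 0}. F (fst x)) = (if h = 0 then 0 else (\<Sum>y\<in>st k M (h - 1). F (fst y)))"
  proof (cases h)
    case 0
    then show ?thesis unfolding fb0 N_def using fib0_zero by simp
  next
    case (Suc h')
    have "(\<Sum>y\<in>st k M h'. F (fst (g0 M y))) = (\<Sum>x\<in>fib0 k (Suc M) (Suc h'). F (fst x))"
      by (rule sum.reindex_bij_betw[OF bij_fib0])
    moreover have "F (fst (g0 M y)) = F (fst y)" for y by (simp add: g0_def)
    ultimately show ?thesis unfolding fb0 N_def Suc by simp
  qed
  also have "(\<Sum>j\<in>{1..N}. \<Sum>x\<in>{x\<in>S. cls x = j}. F (fst x)) =
      (\<Sum>j\<in>{1..N}. \<Sum>y\<in>st k M (h + k*j - 1). F (fst (gj M (k*j) y)))"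
  proof (rule sum.cong[OF refl])
    fix j assume "j \<in> {1..N}"
    then have j: "1 \<le> j" by simp
    then have "0 < k * j" using k by simp
    have "(\<Sum>y\<in>st k M (h + k*j - 1). F (fst (gj M (k*j) y))) = (\<Sum>x\<in>fib k (Suc M) h (k*j). F (fst x))"
      by (rule sum.reindex_bij_betw[OF bij_fib[OF \<open>0 < k*j\<close>]]) simp
    then show "(\<Sum>x\<in>{x\<in>S. cls x = j}. F (fst x)) = (\<Sum>y\<in>st k M (h + k*j - 1). F (fst (gj M (k*j) y)))"
      unfolding fbj[OF j] N_def by simp
  qed
  finally show ?thesis unfolding S_def N_def .
qed


lemma main_count:
  assumes k: "0 < k"
  shows "int (card (st k N h)) = rr k N h \<and> int (\<Sum>x\<in>st k N h. card (fst x)) = tt k N h"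
proof (induction N arbitrary: h)
  case 0
  show ?case
  proof (cases h)
    case 0
    then show ?thesis by (simp add: st_zero rr_def tt_def rf_def tf_def)
  next
    case (Suc h')
    then show ?thesis using rr_big[OF k, of 0 h] tt_big[OF k, of 0 h] by (simp add: st_zero)
  qed
next
  case (Suc M)
  have IH1: "\<And>h. int (card (st k M h)) = rr k M h" using Suc by blast
  have IH2: "\<And>h. int (\<Sum>x\<in>st k M h. card (fst x)) = tt k M h" using Suc by blast
  have IH2': "\<And>h. (\<Sum>x\<in>st k M h. int (card (fst x))) = tt k M h" using IH2 by simp
  have c: "card (st k (Suc M) h) = (if h = 0 then 0 else card (st k M (h - 1))) +
      (\<Sum>j\<in>{1..Suc M}. card (st k M (h + k*j - 1)))"
    using decomp[OF k, where M=M and h=h and F="\<lambda>_. 1::nat"] by simp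
  have "int (card (st k (Suc M) h)) = (if h = 0 then 0 else rr k M (h - 1)) +
      (\<Sum>j\<in>{1..Suc M}. rr k M (h + k*j - 1))"
    unfolding c by (simp add: IH1)
  also have "\<dots> = rr k (Suc M) h" using L1[OF k, of M h] by simp
  finally have A: "int (card (st k (Suc M) h)) = rr k (Suc M) h" .
  have s: "(\<Sum>x\<in>st k (Suc M) h. card (fst x)) = (if h = 0 then 0 else (\<Sum>y\<in>st k M (h - 1). card (fst y))) +
      (\<Sum>j\<in>{1..Suc M}. (\<Sum>y\<in>st k M (h + k*j - 1). card (fst y)) + card (st k M (h + k*j - 1)))"
  proof -
    have "(\<Sum>y\<in>st k M (h + k*j - 1). card (fst (gj M (k*j) y))) =
        (\<Sum>y\<in>st k M (h + k*j - 1). card (fst y)) + card (st k M (h + k*j - 1))" for j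
      by (subst sum.cong[OF refl card_gj]) (simp_all only: Suc_eq_plus1 sum.distrib card_eq_sum)
    then show ?thesis using decomp[OF k, where M=M and h=h and F=card] by simp
  qed
  have "int (\<Sum>x\<in>st k (Suc M) h. card (fst x)) = (if h = 0 then 0 else tt k M (h - 1)) +
      (\<Sum>j\<in>{1..Suc M}. tt k M (h + k*j - 1) + rr k M (h + k*j - 1))"
    unfolding s by (simp add: IH1 IH2')
  also have "\<dots> = tt k (Suc M) h" using L2[OF k, of M h] by simp
  finally show ?case using A by blast
qed

lemma NCk_st: "bij_betw (\<lambda>P. (P, {})) (NCk k n) (st k (k*n) 0)"
proof (rule bij_betw_byWitness[where f' = fst])
  have eq: "partial k N P {} \<longleftrightarrow> partition_on {1..N} P \<and> noncrossing P \<and> (\<forall>B\<in>P. k dvd card B)" for N P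
    unfolding partial_def by simp
  show "\<forall>a\<in>NCk k n. fst (a, {}) = a" by simp
  show "\<forall>a'\<in>st k (k * n) 0. (fst a', {}) = a'"
  proof
    fix a' assume a: "a' \<in> st k (k * n) 0"
    obtain P Q where a': "a' = (P, Q)" by (cases a')
    have pp: "partial k (k*n) P Q" "card Q = 0" using a a' by (auto simp: st_iff)
    have "finite Q" using partialD(1)[OF pp(1)] finite_subset by blast
    then have "Q = {}" using pp(2) by simp
    then show "(fst a', {}) = a'" using a' by simp
  qed
  show "(\<lambda>P. (P, {})) ` NCk k n \<subseteq> st k (k * n) 0"
    unfolding NCk_def by (auto simp: st_iff eq)
  show "fst ` st k (k * n) 0 \<subseteq> NCk k n"
  proof
    fix P assume "P \<in> fst ` st k (k * n) 0"
    then obtain Q where a: "(P, Q) \<in> st k (k*n) 0" by force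
    have pp: "partial k (k*n) P Q" "card Q = 0" using a by (auto simp: st_iff)
    have "finite Q" using partialD(1)[OF pp(1)] finite_subset by blast
    then have "Q = {}" using pp(2) by simp
    then have "partial k (k*n) P {}" using pp(1) by simp
    then show "P \<in> NCk k n" unfolding eq NCk_def by simp
  qed
qed

theorem corollary2p4:
  fixes k n :: nat
  assumes "0 < k" and "0 < n"
  shows "(\<Sum>P\<in>NCk k n. card P) = (n * (k + 1) - 1) choose (n * k)"
proof -
  obtain n' where n: "n = Suc n'" using assms(2) gr0_implies_Suc by blast
  have e1: "(\<Sum>P\<in>NCk k n. card P) = (\<Sum>x\<in>st k (k*n) 0. card (fst x))"
    using sum.reindex_bij_betw[OF NCk_st, of "\<lambda>x. card (fst x)"] by simp
  have e2: "int (\<Sum>x\<in>st k (k*n) 0. card (fst x)) = tt k (k*n) 0"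
    using main_count[OF assms(1)] by blast
  have e3: "tt k (k*n) 0 = int ((k*n + n') choose n')"
    using tt_eq[OF assms(1), of 0 n] unfolding n by (simp add: tf_def)
  have e4: "(\<Sum>x\<in>st k (k*n) 0. card (fst x)) = (k*n + n') choose n'"
    using e2 e3 of_nat_eq_iff by metis
  have e5: "n * (k + 1) - 1 = k*n + n'" unfolding n by (simp add: algebra_simps)
  have e6: "(k*n + n') choose (n*k) = (k*n + n') choose n'"
    by (subst binomial_symmetric[of "n*k"]) (auto simp: algebra_simps)
  show ?thesis unfolding e1 e4 e5 e6 ..
qed

end
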